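(* Define integers $\lambda_r$ for $r\ge 1$ by $\lambda_1=1$ and $\lambda_r = 2\left(3^{\lceil r/2 \rceil}+1\right)\lambda_{\lceil r/2 \rceil}$ for $r \ge 2$. Then for every integer $r \ge 1$, $g(3^r,3) \le \lambda_r$.
   Context: For integers $2\le k\le n$, let $S_n$ denote the set of permutations of $[n]=\{1,\dots,n\}$ (written as sequences), and $S_{n,k}$ the set of all sequences of $k$ distinct elements of $[n]$. A sequence $\kappa\in S_{n,k}$ is a subsequence of a permutation $\pi\in S_n$ if its elements appear in $\pi$ in the same relative order as in $\kappa$. A perfect sequence covering array ${\rm PSCA}(n,k)$ with multiplicity $\lambda$ (a positive integer) is a multiset $X$ of elements of $S_n$ such that every $\kappa\in S_{n,k}$ is a subsequence of exactly $\lambda$ elements of $X$ (counted with multiplicity); such an $X$ has size $\lambda k!$. $g(n,k)$ denotes the smallest $\lambda$ for which a ${\rm PSCA}(n,k)$ with multiplicity $\lambda$ exists. *)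

theory Defs
  imports Main "HOL-Library.Multiset" "HOL-Library.Sublist"
begin

definition perms :: "nat \<Rightarrow> nat list set" where
  "perms n = {\<pi>. distinct \<pi> \<and> set \<pi> = {1..n}}"

definition kseqs :: "nat \<Rightarrow> nat \<Rightarrow> nat list set" where
  "kseqs n k = {\<kappa>. distinct \<kappa> \<and> length \<kappa> = k \<and> set \<kappa> \<subseteq> {1..n}}"

definition is_PSCA :: "nat \<Rightarrow> nat \<Rightarrow> nat \<Rightarrow> nat list multiset \<Rightarrow> bool" where
  "is_PSCA n k lam X \<longleftrightarrow>
     (\<forall>\<pi>\<in>#X. \<pi> \<in> perms n) \<and>
     (\<forall>\<kappa>\<in>kseqs n k. size (filter_mset (\<lambda>\<pi>. subseq \<kappa> \<pi>) X) = lam)"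

definition g :: "nat \<Rightarrow> nat \<Rightarrow> nat" where
  "g n k = (LEAST lam. lam > 0 \<and> (\<exists>X. is_PSCA n k lam X))"

text \<open>lambda_1 = 1, lambda_r = 2 (3^{ceil(r/2)} + 1) lambda_{ceil(r/2)} for r >= 2;
  ceil(r/2) = (r+1) div 2. Value at 0 is irrelevant.\<close>
function lam_seq :: "nat \<Rightarrow> nat" where
  "lam_seq r = (if r \<le> 1 then 1
                else 2 * (3 ^ ((r + 1) div 2) + 1) * lam_seq ((r + 1) div 2))"
  by pat_completeness auto
termination by (relation "measure id") auto

end

theory Submission
  imports Defs "Berlekamp_Zassenhaus.Distinct_Degree_Factorization"
begin

typedef three = "{0::nat,1,2}" by auto

instance three :: finite
proof
  have "finite (Abs_three ` {0::nat,1,2})" by simp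
  moreover have "Abs_three ` {0::nat,1,2} = UNIV"
    by (metis (mono_tags) Rep_three Rep_three_inverse image_eqI UNIV_eq_I)
  ultimately show "finite (UNIV :: three set)" by metis
qed

lemma card_three: "CARD(three) = 3"
proof -
  have "bij_betw Rep_three UNIV {0::nat,1,2}"
    by (metis (mono_tags, lifting) Rep_three Rep_three_inject bij_betw_def image_eqI inj_on_def
        Abs_three_inverse subsetI subset_antisym image_subsetI UNIV_I)
  hence "CARD(three) = card {0::nat,1,2}" by (rule bij_betw_same_card)
  thus ?thesis by simp
qed

instance three :: prime_card
  by standard (simp add: card_three)

lemma pderiv_P:
  assumes "s \<ge> 1"
  shows "pderiv (monom (1::three mod_ring) 1 ^ (3^s) - monom 1 1) = -1"
proof -
  have "(of_nat (3^s) :: three mod_ring) = 0"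
  proof -
    have "(of_nat (3^s) :: three mod_ring) = (of_nat CARD(three))^s"
      by (simp add: card_three)
    also have "\<dots> = 0" using assms by (simp add: of_nat_card_eq_0)
    finally show ?thesis .
  qed
  thus ?thesis unfolding x_pow_n by (simp add: pderiv_diff pderiv_monom)
qed

lemma no_sq_factor:
  fixes P q :: "three mod_ring poly"
  assumes "pderiv P = -1" "q * q dvd P"
  shows "is_unit q"
proof -
  obtain h where h: "P = q * q * h" using assms(2) unfolding dvd_def by blast
  have "pderiv P = q * (2 * pderiv q * h + q * pderiv h)"
    unfolding h by (simp add: pderiv_mult algebra_simps)
  hence "q dvd -1" using assms(1) by (metis dvdI)
  thus ?thesis by simp
qed

lemma irr_exists:
  assumes s: "s \<ge> 1"
  shows "\<exists>f::three mod_ring poly. irreducible f \<and> degree f = s"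
proof (rule ccontr)
  assume no: "\<not> ?thesis"
  define X :: "three mod_ring poly" where "X = monom 1 1"
  define P where "P = X ^ (3^s) - X"
  define Q where "Q = (\<Prod>d\<in>{1..<s}. X ^ (3^d) - X)"
  have degXd: "degree (X ^ (3^d) - X) = 3^d" if "d \<ge> 1" for d
  proof -
    have "(3::nat)^d \<ge> 3^1" using that by (intro power_increasing) auto
    thus ?thesis unfolding X_def x_pow_n diff_conv_add_uminus
      by (subst degree_add_eq_left) (auto simp: degree_monom_eq)
  qed
  have P0: "P \<noteq> 0" using degXd[OF s] unfolding P_def
    by (metis degree_0 less_numeral_extra(3) zero_less_power zero_less_numeral)
  have "\<forall>d\<in>{1..<s}. X ^ (3^d) - X \<noteq> 0"
  proof
    fix d assume "d \<in> {1..<s}"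
    hence "degree (X ^ (3^d) - X) = 3^d" using degXd by auto
    thus "X ^ (3^d) - X \<noteq> 0" by (metis degree_0 power_not_zero zero_neq_numeral)
  qed
  hence Q0: "Q \<noteq> 0" unfolding Q_def by simp
  have "degree Q \<le> (\<Sum>d\<in>{1..<s}. 3^d)"
    unfolding Q_def by (rule order.trans[OF degree_prod_sum_le]) (auto simp: degXd)
  also have "(\<Sum>d\<in>{1..<s}. (3::nat)^d) < 3^s"
  proof -
    have "(\<Sum>d\<in>{1..<k}. (3::nat)^d) * 2 + 3 \<le> 3^k" if "k \<ge> 1" for k
      using that
    proof (induction k rule: dec_induct)
      case base thus ?case by simp
    next
      case (step k) thus ?case by simp
    qed
    from this[OF s] show ?thesis by linarith
  qed
  finally have degQ: "degree Q < 3^s" .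
  have degP: "degree P = 3^s" unfolding P_def by (rule degXd[OF s])
  have dP: "pderiv P = -1" unfolding P_def X_def using pderiv_P[OF s] by simp
  have "prime_factorization P \<subseteq># prime_factorization Q"
  proof (rule mset_subset_eqI)
    fix p
    show "count (prime_factorization P) p \<le> count (prime_factorization Q) p"
    proof (cases "p \<in> prime_factors P")
      case False thus ?thesis by (simp add: not_in_iff)
    next
      case True
      hence pp: "prime p" and pdvd: "p dvd P" by (auto simp: in_prime_factors_iff)
      have "multiplicity p P \<le> 1"
      proof (rule ccontr)
        assume "\<not> ?thesis"
        hence "p ^ 2 dvd P" by (intro multiplicity_dvd') auto
        hence "p * p dvd P" by (simp only: power2_eq_square)
        hence "is_unit p" by (rule no_sq_factor[OF dP])
        thus False using pp not_prime_unit by blast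
      qed
      hence c1: "count (prime_factorization P) p \<le> 1" using pp by (simp add: count_prime_factorization_prime)
      have irr: "irreducible p" using pp by (intro prime_elem_imp_irreducible prime_imp_prime_elem)
      define d where "d = degree p"
      have nu: "\<not> is_unit p" using pp not_prime_unit by blast
      have p0: "p \<noteq> 0" using pp by auto
      have "degree p \<noteq> 0" using is_unit_iff_degree[OF p0] nu by simp
      hence d1: "d \<ge> 1" unfolding d_def by simp
      have "d \<le> s"
      proof (rule ccontr)
        assume "\<not> d \<le> s"
        hence "\<not> p dvd monom 1 1 ^ CARD(three) ^ s - monom 1 1"
          using degree_divisor2[OF irr d_def[symmetric], of s] s by auto
        thus False using pdvd by (simp add: P_def X_def card_three)
      qed
      moreover have "d \<noteq> s" using no irr d_def by auto
      ultimately have ds: "d \<in> {1..<s}" using d1 by auto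
      have "p dvd X ^ (3^d) - X" using degree_divisor1[OF irr d_def[symmetric]]
        by (simp add: X_def card_three)
      also have "\<dots> dvd Q" unfolding Q_def using ds by (intro dvd_prodI) auto
      finally have "p dvd Q" .
      hence "p \<in> prime_factors Q" using pp Q0 by (auto simp: in_prime_factors_iff)
      hence "count (prime_factorization Q) p \<ge> 1" by (simp add: Suc_le_eq)
      thus ?thesis using c1 by linarith
    qed
  qed
  hence "P dvd Q" using P0 prime_factorization_subset_imp_dvd by blast
  hence "degree P \<le> degree Q" using Q0 by (metis divides_degree)
  thus False using degP degQ by simp
qed

definition rk :: "nat list \<Rightarrow> nat \<Rightarrow> nat" where
  "rk xs a = length (takeWhile (\<lambda>b. b \<noteq> a) xs)"

lemma rk_less: "a \<in> set xs \<Longrightarrow> rk xs a < length xs"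
  unfolding rk_def by (induction xs) auto

lemma nth_rk: "a \<in> set xs \<Longrightarrow> xs ! rk xs a = a"
  unfolding rk_def using nth_length_takeWhile[of "\<lambda>b. b \<noteq> a" xs] rk_less[of a xs]
  unfolding rk_def by auto

lemma rk_nth: "distinct xs \<Longrightarrow> i < length xs \<Longrightarrow> rk xs (xs ! i) = i"
  using nth_rk[of "xs ! i" xs] rk_less[of "xs ! i" xs] nth_eq_iff_index_eq by force

lemma rk_inj: "a \<in> set xs \<Longrightarrow> b \<in> set xs \<Longrightarrow> rk xs a = rk xs b \<longleftrightarrow> a = b"
  by (metis nth_rk)

lemma rk_rev: "distinct xs \<Longrightarrow> a \<in> set xs \<Longrightarrow> rk (rev xs) a = length xs - 1 - rk xs a"
proof -
  assume d: "distinct xs" and a: "a \<in> set xs"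
  let ?i = "rk xs a"
  have i: "?i < length xs" using rk_less[OF a] .
  have "rev xs ! (length xs - 1 - ?i) = xs ! ?i" using i by (simp add: rev_nth)
  also have "\<dots> = a" using nth_rk[OF a] .
  finally have ra: "rev xs ! (length xs - 1 - ?i) = a" .
  have "rk (rev xs) (rev xs ! (length xs - 1 - ?i)) = length xs - 1 - ?i"
    using d i by (intro rk_nth) auto
  thus ?thesis using ra by simp
qed

lemma rk_rev_less: "distinct xs \<Longrightarrow> a \<in> set xs \<Longrightarrow> b \<in> set xs \<Longrightarrow>
   rk (rev xs) a < rk (rev xs) b \<longleftrightarrow> rk xs b < rk xs a"
  using rk_rev[of xs a] rk_rev[of xs b] rk_less[of a xs] rk_less[of b xs] by auto

lemma sorted_rk: "distinct xs \<Longrightarrow> sorted_wrt (\<lambda>a b. rk xs a < rk xs b) xs"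
  unfolding sorted_wrt_iff_nth_less by (auto simp: rk_nth)

lemma subseq_sorted_iff:
  fixes f :: "'a \<Rightarrow> nat"
  assumes "sorted_wrt (\<lambda>a b. f a < f b) L"
  shows "subseq xs L \<longleftrightarrow> set xs \<subseteq> set L \<and> sorted_wrt (\<lambda>a b. f a < f b) xs"
  using assms
proof (induction L arbitrary: xs)
  case Nil thus ?case by (cases xs) auto
next
  case (Cons a L)
  have sa: "\<forall>b\<in>set L. f a < f b" and sL: "sorted_wrt (\<lambda>a b. f a < f b) L" using Cons.prems by auto
  show ?case
  proof (cases xs)
    case Nil thus ?thesis by simp
  next
    case (Cons x xs')
    show ?thesis
    proof (cases "x = a")
      case True
      have "subseq xs (a # L) \<longleftrightarrow> subseq xs' L" using Cons True by simp
      also have "\<dots> \<longleftrightarrow> set xs' \<subseteq> set L \<and> sorted_wrt (\<lambda>a b. f a < f b) xs'" using Cons.IH[OF sL] .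
      also have "\<dots> \<longleftrightarrow> set xs \<subseteq> set (a # L) \<and> sorted_wrt (\<lambda>a b. f a < f b) xs"
        using Cons True sa by auto
      finally show ?thesis .
    next
      case False
      have "subseq xs (a # L) \<longleftrightarrow> subseq xs L" using Cons False by simp
      also have "\<dots> \<longleftrightarrow> set xs \<subseteq> set L \<and> sorted_wrt (\<lambda>a b. f a < f b) xs" using Cons.IH[OF sL] .
      also have "\<dots> \<longleftrightarrow> set xs \<subseteq> set (a # L) \<and> sorted_wrt (\<lambda>a b. f a < f b) xs"
      proof
        assume "set xs \<subseteq> set (a # L) \<and> sorted_wrt (\<lambda>a b. f a < f b) xs"
        hence h1: "set xs \<subseteq> insert a (set L)" and h2: "sorted_wrt (\<lambda>a b. f a < f b) (x # xs')"
          using Cons by auto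
        have xL: "x \<in> set L" using h1 False Cons by auto
        have "a \<notin> set xs'"
        proof
          assume "a \<in> set xs'"
          hence "f x < f a" using h2 by auto
          moreover have "f a < f x" using sa xL by auto
          ultimately show False by simp
        qed
        hence "set xs \<subseteq> set L" using h1 False Cons by auto
        thus "set xs \<subseteq> set L \<and> sorted_wrt (\<lambda>a b. f a < f b) xs" using h2 Cons by simp
      qed auto
      finally show ?thesis .
    qed
  qed
qed

lemma subseq3_iff:
  fixes f :: "'a \<Rightarrow> nat"
  assumes "sorted_wrt (\<lambda>a b. f a < f b) L"
  shows "subseq [x,y,z] L \<longleftrightarrow> x \<in> set L \<and> y \<in> set L \<and> z \<in> set L \<and> f x < f y \<and> f y < f z"
  using subseq_sorted_iff[OF assms, of "[x,y,z]"] by auto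

lemma sorted_strict:
  fixes f :: "'a \<Rightarrow> nat"
  assumes "distinct xs" "inj_on f (set xs)" "sorted_wrt (\<lambda>a b. f a \<le> f b) xs"
  shows "sorted_wrt (\<lambda>a b. f a < f b) xs"
  using assms
proof (induction xs)
  case Nil thus ?case by simp
next
  case (Cons a xs)
  have "\<forall>b\<in>set xs. f a \<noteq> f b" using Cons.prems(1,2) by (auto simp: inj_on_def)
  moreover have "\<forall>b\<in>set xs. f a \<le> f b" using Cons.prems(3) by simp
  ultimately have "\<forall>b\<in>set xs. f a < f b" by (simp add: order.strict_iff_order)
  moreover have "sorted_wrt (\<lambda>a b. f a < f b) xs" using Cons by (auto simp: inj_on_def)
  ultimately show ?case by simp
qed

lemma sort_key_strict:
  fixes f :: "'a \<Rightarrow> nat"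
  assumes "distinct xs" "inj_on f (set xs)"
  shows "sorted_wrt (\<lambda>a b. f a < f b) (sort_key f xs)"
proof (rule sorted_strict)
  show "distinct (sort_key f xs)" using assms(1) by simp
  show "inj_on f (set (sort_key f xs))" using assms(2) by simp
  have "sorted (map f (sort_key f xs))" by simp
  thus "sorted_wrt (\<lambda>a b. f a \<le> f b) (sort_key f xs)" by (simp add: sorted_map)
qed

lemma size_filter_disj:
  assumes "\<And>x. x \<in># M \<Longrightarrow> \<not> (P x \<and> Q x)"
  shows "size (filter_mset (\<lambda>x. P x \<or> Q x) M) = size (filter_mset P M) + size (filter_mset Q M)"
proof -
  have "filter_mset (\<lambda>x. P x \<or> Q x) M = filter_mset P M + filter_mset Q M"
  proof (rule multiset_eqI)
    fix x
    show "count (filter_mset (\<lambda>x. P x \<or> Q x) M) x = count (filter_mset P M + filter_mset Q M) x"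
    proof (cases "x \<in># M")
      case True thus ?thesis using assms[OF True] by auto
    next
      case False thus ?thesis by (simp add: not_in_iff)
    qed
  qed
  thus ?thesis by simp
qed

lemma lexq:
  fixes a b c e q :: nat
  assumes "b < q" "e < q"
  shows "a * q + b < c * q + e \<longleftrightarrow> a < c \<or> (a = c \<and> b < e)"
proof (cases "a < c")
  case True
  hence "Suc a * q \<le> c * q" by (intro mult_le_mono1) simp
  thus ?thesis using True assms by simp
next
  case False
  show ?thesis
  proof (cases "a = c")
    case True thus ?thesis by simp
  next
    case False2: False
    hence "c < a" using False by simp
    hence "Suc c * q \<le> a * q" by (intro mult_le_mono1) simp
    thus ?thesis using False2 False assms by simp
  qed
qed

lemma lexq_eq:
  fixes a b c e q :: nat
  assumes "b < q" "e < q"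
  shows "a * q + b = c * q + e \<longleftrightarrow> a = c \<and> b = e"
  using lexq[OF assms, of a c] lexq[OF assms(2,1), of c a] by (metis nat_neq_iff)

locale constr =
  fixes q n lam :: nat and X :: "nat list multiset" and D :: "'d set" and lab pos :: "'d \<Rightarrow> nat \<Rightarrow> nat"
  assumes X: "is_PSCA q 3 lam X" and q3: "q \<ge> 3" and finD: "finite D"
    and labr: "\<forall>d\<in>D. \<forall>p\<in>{1..n}. lab d p \<in> {1..q} \<and> pos d p \<in> {1..q}"
    and injlp: "\<forall>d\<in>D. \<forall>p\<in>{1..n}. \<forall>p'\<in>{1..n}. p \<noteq> p' \<longrightarrow> lab d p \<noteq> lab d p' \<or> pos d p \<noteq> pos d p'"
    and uniq: "\<forall>p\<in>{1..n}. \<forall>p'\<in>{1..n}. p \<noteq> p' \<longrightarrow> card {d\<in>D. lab d p = lab d p'} = 1"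
begin

lemma Xperm: "\<sigma> \<in># X \<Longrightarrow> distinct \<sigma> \<and> set \<sigma> = {1..q} \<and> length \<sigma> = q"
proof -
  assume s: "\<sigma> \<in># X"
  have h: "distinct \<sigma> \<and> set \<sigma> = {1..q}" using X s unfolding is_PSCA_def perms_def by auto
  hence "length \<sigma> = card {1..q}" by (metis distinct_card)
  thus ?thesis using h by simp
qed

lemma cnt3:
  assumes "a \<in> {1..q}" "b \<in> {1..q}" "c \<in> {1..q}" "a \<noteq> b" "b \<noteq> c" "a \<noteq> c"
  shows "size (filter_mset (\<lambda>\<sigma>. rk \<sigma> a < rk \<sigma> b \<and> rk \<sigma> b < rk \<sigma> c) X) = lam"
proof -
  have k: "[a,b,c] \<in> kseqs q 3" using assms by (auto simp: kseqs_def)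
  have "filter_mset (\<lambda>\<sigma>. rk \<sigma> a < rk \<sigma> b \<and> rk \<sigma> b < rk \<sigma> c) X = filter_mset (\<lambda>\<sigma>. subseq [a,b,c] \<sigma>) X"
  proof (rule filter_mset_cong)
    fix \<sigma> assume s: "\<sigma> \<in># X"
    show "(rk \<sigma> a < rk \<sigma> b \<and> rk \<sigma> b < rk \<sigma> c) = subseq [a,b,c] \<sigma>"
      using subseq3_iff[OF sorted_rk, of \<sigma> a b c] Xperm[OF s] assms by auto
  qed simp
  thus ?thesis using X k unfolding is_PSCA_def by simp
qed

lemma cnt2:
  assumes "a \<in> {1..q}" "b \<in> {1..q}" "a \<noteq> b"
  shows "size (filter_mset (\<lambda>\<sigma>. rk \<sigma> a < rk \<sigma> b) X) = 3 * lam"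
proof -
  have "card ({1..q} - {a,b}) \<ge> 1" using q3 assms by (simp add: card_Diff_subset)
  then obtain c where c: "c \<in> {1..q}" "c \<noteq> a" "c \<noteq> b"
    by (metis One_nat_def card_0_eq finite_Diff finite_atLeastAtMost insert_iff not_one_le_zero
        Diff_iff ex_in_conv)
  define P1 where "P1 \<sigma> = (rk \<sigma> c < rk \<sigma> a \<and> rk \<sigma> a < rk \<sigma> b)" for \<sigma>
  define P2 where "P2 \<sigma> = (rk \<sigma> a < rk \<sigma> c \<and> rk \<sigma> c < rk \<sigma> b)" for \<sigma>
  define P3 where "P3 \<sigma> = (rk \<sigma> a < rk \<sigma> b \<and> rk \<sigma> b < rk \<sigma> c)" for \<sigma>
  have "filter_mset (\<lambda>\<sigma>. rk \<sigma> a < rk \<sigma> b) X = filter_mset (\<lambda>\<sigma>. P1 \<sigma> \<or> (P2 \<sigma> \<or> P3 \<sigma>)) X"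
  proof (rule filter_mset_cong)
    fix \<sigma> assume s: "\<sigma> \<in># X"
    have "rk \<sigma> c \<noteq> rk \<sigma> a" "rk \<sigma> c \<noteq> rk \<sigma> b" using rk_inj[of _ \<sigma>] Xperm[OF s] c assms by auto
    thus "(rk \<sigma> a < rk \<sigma> b) = (P1 \<sigma> \<or> (P2 \<sigma> \<or> P3 \<sigma>))" unfolding P1_def P2_def P3_def by auto
  qed simp
  also have "size \<dots> = size (filter_mset P1 X) + (size (filter_mset P2 X) + size (filter_mset P3 X))"
    by (subst size_filter_disj, force simp: P1_def P2_def P3_def, subst size_filter_disj)
       (auto simp: P1_def P2_def P3_def)
  also have "\<dots> = 3 * lam" using cnt3 assms c unfolding P1_def P2_def P3_def by simp
  finally show ?thesis .
qed

end

context constr begin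

definition key :: "nat list \<Rightarrow> bool \<Rightarrow> 'd \<Rightarrow> nat \<Rightarrow> nat" where
  "key \<sigma> \<epsilon> d p = rk \<sigma> (lab d p) * q + rk (if \<epsilon> then rev \<sigma> else \<sigma>) (pos d p)"

definition perm :: "nat list \<Rightarrow> bool \<Rightarrow> 'd \<Rightarrow> nat list" where
  "perm \<sigma> \<epsilon> d = sort_key (key \<sigma> \<epsilon> d) [1..<Suc n]"

lemma perm_ok: "perm \<sigma> \<epsilon> d \<in> perms n"
  unfolding perm_def perms_def by auto

lemma rk_bound: "\<sigma> \<in># X \<Longrightarrow> u \<in> {1..q} \<Longrightarrow> rk (if \<epsilon> then rev \<sigma> else \<sigma>) u < q"
  using rk_less[of u "if \<epsilon> then rev \<sigma> else \<sigma>"] Xperm[of \<sigma>] by (cases \<epsilon>) auto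

lemma key_less:
  assumes s: "\<sigma> \<in># X" and d: "d \<in> D" and x: "x \<in> {1..n}" and y: "y \<in> {1..n}"
  shows "key \<sigma> \<epsilon> d x < key \<sigma> \<epsilon> d y \<longleftrightarrow>
    rk \<sigma> (lab d x) < rk \<sigma> (lab d y) \<or>
    (lab d x = lab d y \<and> rk (if \<epsilon> then rev \<sigma> else \<sigma>) (pos d x) < rk (if \<epsilon> then rev \<sigma> else \<sigma>) (pos d y))"
proof -
  have b: "rk (if \<epsilon> then rev \<sigma> else \<sigma>) (pos d x) < q" "rk (if \<epsilon> then rev \<sigma> else \<sigma>) (pos d y) < q"
    using rk_bound[OF s] labr d x y by auto
  have "rk \<sigma> (lab d x) = rk \<sigma> (lab d y) \<longleftrightarrow> lab d x = lab d y"
    using rk_inj[of "lab d x" \<sigma> "lab d y"] Xperm[OF s] labr d x y by auto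
  thus ?thesis unfolding key_def using lexq[OF b] by simp
qed

lemma key_inj:
  assumes s: "\<sigma> \<in># X" and d: "d \<in> D"
  shows "inj_on (key \<sigma> \<epsilon> d) {1..n}"
proof (rule inj_onI)
  fix x y assume x: "x \<in> {1..n}" and y: "y \<in> {1..n}" and e: "key \<sigma> \<epsilon> d x = key \<sigma> \<epsilon> d y"
  let ?s = "if \<epsilon> then rev \<sigma> else \<sigma>"
  have b: "rk ?s (pos d x) < q" "rk ?s (pos d y) < q"
    using rk_bound[OF s] labr d x y by auto
  have "rk \<sigma> (lab d x) = rk \<sigma> (lab d y) \<and> rk ?s (pos d x) = rk ?s (pos d y)"
    using e lexq_eq[OF b] unfolding key_def by simp
  moreover have "set ?s = {1..q}" using Xperm[OF s] by simp
  ultimately have "lab d x = lab d y \<and> pos d x = pos d y"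
    using rk_inj[of "lab d x" \<sigma> "lab d y"] rk_inj[of "pos d x" ?s "pos d y"] Xperm[OF s] labr d x y
    by auto
  thus "x = y" using injlp d x y by blast
qed

lemma perm_subseq:
  assumes s: "\<sigma> \<in># X" and d: "d \<in> D" and x: "x \<in> {1..n}" and y: "y \<in> {1..n}" and z: "z \<in> {1..n}"
  shows "subseq [x,y,z] (perm \<sigma> \<epsilon> d) \<longleftrightarrow> key \<sigma> \<epsilon> d x < key \<sigma> \<epsilon> d y \<and> key \<sigma> \<epsilon> d y < key \<sigma> \<epsilon> d z"
proof -
  have "sorted_wrt (\<lambda>a b. key \<sigma> \<epsilon> d a < key \<sigma> \<epsilon> d b) (perm \<sigma> \<epsilon> d)"
  proof -
    have sn: "set [1..<Suc n] = {1..n}" by auto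
    show ?thesis unfolding perm_def by (rule sort_key_strict) (use key_inj[OF s d] sn in simp_all)
  qed
  from subseq3_iff[OF this] show ?thesis using x y z unfolding perm_def by auto
qed

lemma F:
  assumes s: "\<sigma> \<in># X" and d: "d \<in> D" and x: "x \<in> {1..n}" and y: "y \<in> {1..n}" and z: "z \<in> {1..n}"
  shows "subseq [x,y,z] (perm \<sigma> \<epsilon> d) \<longleftrightarrow>
    (rk \<sigma> (lab d x) < rk \<sigma> (lab d y) \<or>
      (lab d x = lab d y \<and> rk (if \<epsilon> then rev \<sigma> else \<sigma>) (pos d x) < rk (if \<epsilon> then rev \<sigma> else \<sigma>) (pos d y))) \<and>
    (rk \<sigma> (lab d y) < rk \<sigma> (lab d z) \<or>
      (lab d y = lab d z \<and> rk (if \<epsilon> then rev \<sigma> else \<sigma>) (pos d y) < rk (if \<epsilon> then rev \<sigma> else \<sigma>) (pos d z)))"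
  using perm_subseq[OF assms] key_less[OF s d x y] key_less[OF s d y z] by simp

end

lemma size_filter_sum:
  "finite D \<Longrightarrow> size (filter_mset P (\<Sum>d\<in>D. f d)) = (\<Sum>d\<in>D. size (filter_mset P (f d)))"
  by (induction D rule: finite_induct) simp_all

lemma sum_chi: "finite D \<Longrightarrow> (\<Sum>d\<in>D. (if P d then 1 else 0 :: int)) = int (card {d\<in>D. P d})"
  by (simp add: sum.inter_filter[symmetric])

context constr begin

definition cntd :: "nat list \<Rightarrow> 'd \<Rightarrow> nat" where
  "cntd \<kappa> d = size (filter_mset (\<lambda>\<sigma>. subseq \<kappa> (perm \<sigma> False d)) X)
             + size (filter_mset (\<lambda>\<sigma>. subseq \<kappa> (perm \<sigma> True d)) X)"

definition chi :: "bool \<Rightarrow> int" where "chi b = (if b then 1 else 0)"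

lemma cnt_dir:
  assumes d: "d \<in> D" and x: "x \<in> {1..n}" and y: "y \<in> {1..n}" and z: "z \<in> {1..n}"
    and nxy: "x \<noteq> y" and nyz: "y \<noteq> z" and nxz: "x \<noteq> z"
  shows "int (cntd [x,y,z] d) = 2 * int lam
     + int lam * (chi (lab d x = lab d y) - chi (lab d x = lab d y \<and> lab d y = lab d z))
     + int lam * (chi (lab d y = lab d z) - chi (lab d x = lab d y \<and> lab d y = lab d z))
     - 2 * int lam * (chi (lab d x = lab d z) - chi (lab d x = lab d y \<and> lab d y = lab d z))"
proof -
  define Lx where "Lx = lab d x"
  define Ly where "Ly = lab d y"
  define Lz where "Lz = lab d z"
  define Px where "Px = pos d x"
  define Py where "Py = pos d y"
  define Pz where "Pz = pos d z"
  have inq: "Lx \<in> {1..q}" "Ly \<in> {1..q}" "Lz \<in> {1..q}" "Px \<in> {1..q}" "Py \<in> {1..q}" "Pz \<in> {1..q}"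
    using labr d x y z unfolding Lx_def Ly_def Lz_def Px_def Py_def Pz_def by auto
  have rkeq: "rk \<sigma> u = rk \<sigma> v \<longleftrightarrow> u = v" if "\<sigma> \<in># X" "u \<in> {1..q}" "v \<in> {1..q}" for \<sigma> u v
    using rk_inj[of u \<sigma> v] Xperm[OF that(1)] that(2,3) by auto
  have Fs: "subseq [x,y,z] (perm \<sigma> False d) \<longleftrightarrow>
     (rk \<sigma> Lx < rk \<sigma> Ly \<or> (Lx = Ly \<and> rk \<sigma> Px < rk \<sigma> Py)) \<and>
     (rk \<sigma> Ly < rk \<sigma> Lz \<or> (Ly = Lz \<and> rk \<sigma> Py < rk \<sigma> Pz))" if s: "\<sigma> \<in># X" for \<sigma>
    using F[OF s d x y z, of False] unfolding Lx_def Ly_def Lz_def Px_def Py_def Pz_def by simp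
  have Ft: "subseq [x,y,z] (perm \<sigma> True d) \<longleftrightarrow>
     (rk \<sigma> Lx < rk \<sigma> Ly \<or> (Lx = Ly \<and> rk \<sigma> Py < rk \<sigma> Px)) \<and>
     (rk \<sigma> Ly < rk \<sigma> Lz \<or> (Ly = Lz \<and> rk \<sigma> Pz < rk \<sigma> Py))" if s: "\<sigma> \<in># X" for \<sigma>
  proof -
    have "rk (rev \<sigma>) Px < rk (rev \<sigma>) Py \<longleftrightarrow> rk \<sigma> Py < rk \<sigma> Px"
         "rk (rev \<sigma>) Py < rk (rev \<sigma>) Pz \<longleftrightarrow> rk \<sigma> Pz < rk \<sigma> Py"
      using rk_rev_less[of \<sigma>] Xperm[OF s] inq by auto
    thus ?thesis
      using F[OF s d x y z, of True] unfolding Lx_def Ly_def Lz_def Px_def Py_def Pz_def by simp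
  qed
  have cd: "cntd [x,y,z] d = size (filter_mset (\<lambda>\<sigma>. subseq [x,y,z] (perm \<sigma> False d)) X)
             + size (filter_mset (\<lambda>\<sigma>. subseq [x,y,z] (perm \<sigma> True d)) X)"
    by (simp add: cntd_def)
  consider (A) "Lx \<noteq> Ly" "Ly \<noteq> Lz" "Lx \<noteq> Lz" | (B) "Lx = Ly" "Ly = Lz"
    | (C) "Lx = Ly" "Ly \<noteq> Lz" | (Dd) "Ly = Lz" "Lx \<noteq> Ly" | (E) "Lx = Lz" "Lx \<noteq> Ly" by blast
  thus ?thesis
  proof cases
    case A
    have "filter_mset (\<lambda>\<sigma>. subseq [x,y,z] (perm \<sigma> \<epsilon> d)) X
        = filter_mset (\<lambda>\<sigma>. rk \<sigma> Lx < rk \<sigma> Ly \<and> rk \<sigma> Ly < rk \<sigma> Lz) X" for \<epsilon>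
    proof (rule filter_mset_cong)
      fix \<sigma> assume s: "\<sigma> \<in># X"
      show "subseq [x,y,z] (perm \<sigma> \<epsilon> d) = (rk \<sigma> Lx < rk \<sigma> Ly \<and> rk \<sigma> Ly < rk \<sigma> Lz)"
        using Fs[OF s] Ft[OF s] A by (cases \<epsilon>) auto
    qed simp
    hence "cntd [x,y,z] d = lam + lam" using cd cnt3[OF inq(1-3)] A by simp
    thus ?thesis using A unfolding Lx_def Ly_def Lz_def chi_def by simp
  next
    case B
    have pd: "Px \<noteq> Py" "Py \<noteq> Pz" "Px \<noteq> Pz"
      using injlp d x y z nxy nyz nxz B unfolding Lx_def Ly_def Lz_def Px_def Py_def Pz_def by metis+
    have "filter_mset (\<lambda>\<sigma>. subseq [x,y,z] (perm \<sigma> False d)) X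
        = filter_mset (\<lambda>\<sigma>. rk \<sigma> Px < rk \<sigma> Py \<and> rk \<sigma> Py < rk \<sigma> Pz) X"
      by (rule filter_mset_cong) (use Fs B in auto)
    moreover have "filter_mset (\<lambda>\<sigma>. subseq [x,y,z] (perm \<sigma> True d)) X
        = filter_mset (\<lambda>\<sigma>. rk \<sigma> Pz < rk \<sigma> Py \<and> rk \<sigma> Py < rk \<sigma> Px) X"
      by (rule filter_mset_cong) (use Ft B in auto)
    ultimately have "cntd [x,y,z] d = lam + lam"
      using cd cnt3[OF inq(4-6)] cnt3[OF inq(6) inq(5) inq(4)] pd by simp
    thus ?thesis using B unfolding Lx_def Ly_def Lz_def chi_def by simp
  next
    case C
    have pd: "Px \<noteq> Py"
      using injlp d x y nxy C unfolding Lx_def Ly_def Px_def Py_def by metis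
    have "filter_mset (\<lambda>\<sigma>. subseq [x,y,z] (perm \<sigma> False d)) X
        = filter_mset (\<lambda>\<sigma>. rk \<sigma> Ly < rk \<sigma> Lz \<and> rk \<sigma> Px < rk \<sigma> Py) X"
      by (rule filter_mset_cong) (use Fs C in auto)
    moreover have "filter_mset (\<lambda>\<sigma>. subseq [x,y,z] (perm \<sigma> True d)) X
        = filter_mset (\<lambda>\<sigma>. rk \<sigma> Ly < rk \<sigma> Lz \<and> rk \<sigma> Py < rk \<sigma> Px) X"
      by (rule filter_mset_cong) (use Ft C in auto)
    moreover have "size (filter_mset (\<lambda>\<sigma>. rk \<sigma> Ly < rk \<sigma> Lz \<and> rk \<sigma> Px < rk \<sigma> Py) X)
        + size (filter_mset (\<lambda>\<sigma>. rk \<sigma> Ly < rk \<sigma> Lz \<and> rk \<sigma> Py < rk \<sigma> Px) X)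
        = size (filter_mset (\<lambda>\<sigma>. (rk \<sigma> Ly < rk \<sigma> Lz \<and> rk \<sigma> Px < rk \<sigma> Py) \<or> (rk \<sigma> Ly < rk \<sigma> Lz \<and> rk \<sigma> Py < rk \<sigma> Px)) X)"
      by (rule size_filter_disj[symmetric]) auto
    moreover have "filter_mset (\<lambda>\<sigma>. (rk \<sigma> Ly < rk \<sigma> Lz \<and> rk \<sigma> Px < rk \<sigma> Py) \<or> (rk \<sigma> Ly < rk \<sigma> Lz \<and> rk \<sigma> Py < rk \<sigma> Px)) X
        = filter_mset (\<lambda>\<sigma>. rk \<sigma> Ly < rk \<sigma> Lz) X"
    proof (rule filter_mset_cong)
      fix \<sigma> assume s: "\<sigma> \<in># X"
      have "rk \<sigma> Px \<noteq> rk \<sigma> Py" using rkeq[OF s inq(4,5)] pd by simp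
      thus "((rk \<sigma> Ly < rk \<sigma> Lz \<and> rk \<sigma> Px < rk \<sigma> Py) \<or> (rk \<sigma> Ly < rk \<sigma> Lz \<and> rk \<sigma> Py < rk \<sigma> Px)) = (rk \<sigma> Ly < rk \<sigma> Lz)"
        by auto
    qed simp
    ultimately have "cntd [x,y,z] d = 3 * lam" using cd cnt2[OF inq(2,3)] C by simp
    thus ?thesis using C unfolding Lx_def Ly_def Lz_def chi_def by simp
  next
    case Dd
    have pd: "Py \<noteq> Pz"
      using injlp d y z nyz Dd unfolding Ly_def Lz_def Py_def Pz_def by metis
    have "filter_mset (\<lambda>\<sigma>. subseq [x,y,z] (perm \<sigma> False d)) X
        = filter_mset (\<lambda>\<sigma>. rk \<sigma> Lx < rk \<sigma> Ly \<and> rk \<sigma> Py < rk \<sigma> Pz) X"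
      by (rule filter_mset_cong) (use Fs Dd in auto)
    moreover have "filter_mset (\<lambda>\<sigma>. subseq [x,y,z] (perm \<sigma> True d)) X
        = filter_mset (\<lambda>\<sigma>. rk \<sigma> Lx < rk \<sigma> Ly \<and> rk \<sigma> Pz < rk \<sigma> Py) X"
      by (rule filter_mset_cong) (use Ft Dd in auto)
    moreover have "size (filter_mset (\<lambda>\<sigma>. rk \<sigma> Lx < rk \<sigma> Ly \<and> rk \<sigma> Py < rk \<sigma> Pz) X)
        + size (filter_mset (\<lambda>\<sigma>. rk \<sigma> Lx < rk \<sigma> Ly \<and> rk \<sigma> Pz < rk \<sigma> Py) X)
        = size (filter_mset (\<lambda>\<sigma>. (rk \<sigma> Lx < rk \<sigma> Ly \<and> rk \<sigma> Py < rk \<sigma> Pz) \<or> (rk \<sigma> Lx < rk \<sigma> Ly \<and> rk \<sigma> Pz < rk \<sigma> Py)) X)"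
      by (rule size_filter_disj[symmetric]) auto
    moreover have "filter_mset (\<lambda>\<sigma>. (rk \<sigma> Lx < rk \<sigma> Ly \<and> rk \<sigma> Py < rk \<sigma> Pz) \<or> (rk \<sigma> Lx < rk \<sigma> Ly \<and> rk \<sigma> Pz < rk \<sigma> Py)) X
        = filter_mset (\<lambda>\<sigma>. rk \<sigma> Lx < rk \<sigma> Ly) X"
    proof (rule filter_mset_cong)
      fix \<sigma> assume s: "\<sigma> \<in># X"
      have "rk \<sigma> Py \<noteq> rk \<sigma> Pz" using rkeq[OF s inq(5,6)] pd by simp
      thus "((rk \<sigma> Lx < rk \<sigma> Ly \<and> rk \<sigma> Py < rk \<sigma> Pz) \<or> (rk \<sigma> Lx < rk \<sigma> Ly \<and> rk \<sigma> Pz < rk \<sigma> Py)) = (rk \<sigma> Lx < rk \<sigma> Ly)"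
        by auto
    qed simp
    ultimately have "cntd [x,y,z] d = 3 * lam" using cd cnt2[OF inq(1,2)] Dd by simp
    thus ?thesis using Dd unfolding Lx_def Ly_def Lz_def chi_def by auto
  next
    case E
    have "filter_mset (\<lambda>\<sigma>. subseq [x,y,z] (perm \<sigma> \<epsilon> d)) X = filter_mset (\<lambda>\<sigma>. False) X" for \<epsilon>
    proof (rule filter_mset_cong)
      fix \<sigma> assume s: "\<sigma> \<in># X"
      show "subseq [x,y,z] (perm \<sigma> \<epsilon> d) = False"
        using Fs[OF s] Ft[OF s] E by (cases \<epsilon>) auto
    qed simp
    hence "cntd [x,y,z] d = 0" using cd by simp
    thus ?thesis using E unfolding Lx_def Ly_def Lz_def chi_def by auto
  qed
qed

end

lemma in_sum_mset_all:
  "finite D \<Longrightarrow> \<forall>d\<in>D. \<forall>\<pi>\<in>#f d. P \<pi> \<Longrightarrow> \<forall>\<pi>\<in>#(\<Sum>d\<in>D. f d). P \<pi>"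
proof (induction D rule: finite_induct)
  case empty thus ?case by simp
next
  case (insert a F) thus ?case by auto
qed

context constr begin

definition Y :: "nat list multiset" where
  "Y = (\<Sum>d\<in>D. image_mset (\<lambda>\<sigma>. perm \<sigma> False d) X + image_mset (\<lambda>\<sigma>. perm \<sigma> True d) X)"

lemma size_Y: "size (filter_mset P Y) = (\<Sum>d\<in>D. size (filter_mset (\<lambda>\<sigma>. P (perm \<sigma> False d)) X)
   + size (filter_mset (\<lambda>\<sigma>. P (perm \<sigma> True d)) X))"
  unfolding Y_def by (simp add: size_filter_sum[OF finD] filter_mset_image_mset)

theorem Y_PSCA: "is_PSCA n 3 (2 * card D * lam) Y"
  unfolding is_PSCA_def
proof (intro conjI ballI)
  fix \<pi> assume p: "\<pi> \<in># Y"
  have h: "\<forall>d\<in>D. \<forall>\<pi>\<in># image_mset (\<lambda>\<sigma>. perm \<sigma> False d) X + image_mset (\<lambda>\<sigma>. perm \<sigma> True d) X.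
     \<pi> \<in> perms n" using perm_ok by auto
  show "\<pi> \<in> perms n" using in_sum_mset_all[OF finD h] p unfolding Y_def by blast
next
  fix \<kappa> assume k: "\<kappa> \<in> kseqs n 3"
  hence len: "length \<kappa> = 3" and dk: "distinct \<kappa>" and sk: "set \<kappa> \<subseteq> {1..n}" by (auto simp: kseqs_def)
  obtain x y z where kk: "\<kappa> = [x,y,z]" using len
    by (auto simp: numeral_3_eq_3 length_Suc_conv)
  have x: "x \<in> {1..n}" and y: "y \<in> {1..n}" and z: "z \<in> {1..n}" using sk kk by auto
  have nxy: "x \<noteq> y" and nyz: "y \<noteq> z" and nxz: "x \<noteq> z" using dk kk by auto
  define a where "a d = chi (lab d x = lab d y)" for d
  define b where "b d = chi (lab d y = lab d z)" for d
  define c where "c d = chi (lab d x = lab d z)" for d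
  have per: "int (cntd [x,y,z] d) = 2 * int lam + int lam * a d + int lam * b d - 2 * int lam * c d"
    if d: "d \<in> D" for d
    using cnt_dir[OF d x y z nxy nyz nxz] unfolding a_def b_def c_def by (simp add: algebra_simps)
  have "card {d\<in>D. lab d x = lab d y} = 1" using uniq x y nxy by blast
  hence sa: "(\<Sum>d\<in>D. a d) = 1" unfolding a_def chi_def by (simp add: sum_chi[OF finD])
  have "card {d\<in>D. lab d y = lab d z} = 1" using uniq y z nyz by blast
  hence sb: "(\<Sum>d\<in>D. b d) = 1" unfolding b_def chi_def by (simp add: sum_chi[OF finD])
  have "card {d\<in>D. lab d x = lab d z} = 1" using uniq x z nxz by blast
  hence sc: "(\<Sum>d\<in>D. c d) = 1" unfolding c_def chi_def by (simp add: sum_chi[OF finD])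
  have "int (size (filter_mset (subseq \<kappa>) Y)) = (\<Sum>d\<in>D. int (cntd [x,y,z] d))"
    unfolding size_Y kk cntd_def by simp
  also have "\<dots> = (\<Sum>d\<in>D. 2 * int lam + int lam * a d + int lam * b d - 2 * int lam * c d)"
    using per by (rule sum.cong[OF refl])
  also have "\<dots> = 2 * int lam * int (card D) + int lam * (\<Sum>d\<in>D. a d) + int lam * (\<Sum>d\<in>D. b d)
      - 2 * int lam * (\<Sum>d\<in>D. c d)"
    by (simp add: sum.distrib sum_subtractf sum_distrib_left)
  also have "\<dots> = int (2 * card D * lam)" using sa sb sc by simp
  finally show "size (filter_mset (subseq \<kappa>) Y) = 2 * card D * lam" by linarith
qed

end

theorem construction:
  fixes D :: "'d set"
  assumes "is_PSCA q 3 lam X" "q \<ge> 3" "finite D"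
    "\<forall>d\<in>D. \<forall>p\<in>{1..n}. lab d p \<in> {1..q} \<and> pos d p \<in> {1..q}"
    "\<forall>d\<in>D. \<forall>p\<in>{1..n}. \<forall>p'\<in>{1..n}. p \<noteq> p' \<longrightarrow> lab d p \<noteq> lab d p' \<or> pos d p \<noteq> pos d p'"
    "\<forall>p\<in>{1..n}. \<forall>p'\<in>{1..n}. p \<noteq> p' \<longrightarrow> card {d\<in>D. lab d p = lab d p'} = 1"
  shows "\<exists>Y. is_PSCA n 3 (2 * card D * lam) Y"
proof -
  interpret constr q n lam X D lab pos using assms by unfold_locales
  show ?thesis using Y_PSCA by blast
qed

lemma (in field) affine_uniq:
  assumes c: "x\<in>carrier R" "y\<in>carrier R" "x'\<in>carrier R" "y'\<in>carrier R" and ne: "x \<noteq> x'"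
  shows "\<exists>!m. m \<in> carrier R \<and> y \<ominus> m \<otimes> x = y' \<ominus> m \<otimes> x'"
proof -
  define a where "a = x \<ominus> x'"
  define b where "b = y \<ominus> y'"
  have ac: "a \<in> carrier R" and bc: "b \<in> carrier R" using c by (auto simp: a_def b_def)
  have a0: "a \<noteq> \<zero>" using ne c by (simp add: a_def)
  have aU: "a \<in> Units R" using a0 ac by (simp add: field_Units)
  have eq: "y \<ominus> m \<otimes> x = y' \<ominus> m \<otimes> x' \<longleftrightarrow> m \<otimes> a = b" if m: "m \<in> carrier R" for m
  proof -
    have "(y \<ominus> m \<otimes> x) \<ominus> (y' \<ominus> m \<otimes> x') = b \<ominus> m \<otimes> a"
      unfolding a_def b_def using c m by algebra
    hence "y \<ominus> m \<otimes> x = y' \<ominus> m \<otimes> x' \<longleftrightarrow> b \<ominus> m \<otimes> a = \<zero>"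
      using c m by (metis r_right_minus_eq minus_closed m_closed)
    also have "\<dots> \<longleftrightarrow> m \<otimes> a = b" using m ac bc by (metis r_right_minus_eq m_closed)
    finally show ?thesis .
  qed
  have sol: "m \<otimes> a = b \<longleftrightarrow> m = b \<otimes> inv a" if m: "m \<in> carrier R" for m
  proof
    assume "m \<otimes> a = b"
    hence "m \<otimes> a \<otimes> inv a = b \<otimes> inv a" by simp
    thus "m = b \<otimes> inv a" using m aU ac by (simp add: m_assoc)
  next
    assume "m = b \<otimes> inv a"
    thus "m \<otimes> a = b" using aU ac bc by (simp add: m_assoc)
  qed
  have "b \<otimes> inv a \<in> carrier R" using aU bc by simp
  thus ?thesis using eq sol by blast
qed

lemma (in field) affine_inj:
  assumes c: "x\<in>carrier R" "y\<in>carrier R" "y'\<in>carrier R" "m \<in> carrier R"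
    and "y \<ominus> m \<otimes> x = y' \<ominus> m \<otimes> x"
  shows "y = y'"
proof -
  have "(y \<ominus> m \<otimes> x) \<ominus> (y' \<ominus> m \<otimes> x) = y \<ominus> y'" using c by algebra
  hence "y \<ominus> y' = \<zero>" using assms(5) c by (metis r_right_minus_eq minus_closed m_closed)
  thus ?thesis using c by simp
qed

definition lab0 :: "('a, 'b) ring_scheme \<Rightarrow> 'a option \<Rightarrow> 'a \<times> 'a \<Rightarrow> 'a" where
  "lab0 R d p = (case d of None \<Rightarrow> fst p | Some m \<Rightarrow> snd p \<ominus>\<^bsub>R\<^esub> m \<otimes>\<^bsub>R\<^esub> fst p)"
definition pos0 :: "'a option \<Rightarrow> 'a \<times> 'a \<Rightarrow> 'a" where
  "pos0 d p = (case d of None \<Rightarrow> snd p | Some m \<Rightarrow> fst p)"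

lemma affine_structure:
  fixes R :: "('a, 'b) ring_scheme"
  assumes F: "field R" and fin: "finite (carrier R)" and cq: "card (carrier R) = q" and nq: "n \<le> q^2"
  shows "\<exists>(D::'a option set) lab pos. finite D \<and> card D = q + 1 \<and>
     (\<forall>d\<in>D. \<forall>p\<in>{1..n}. lab d p \<in> {1..q} \<and> pos d p \<in> {1..q}) \<and>
     (\<forall>d\<in>D. \<forall>p\<in>{1..n}. \<forall>p'\<in>{1..n}. p \<noteq> p' \<longrightarrow> lab d p \<noteq> lab d p' \<or> pos d p \<noteq> pos d p') \<and>
     (\<forall>p\<in>{1..n}. \<forall>p'\<in>{1..n}. p \<noteq> p' \<longrightarrow> card {d\<in>D. lab d p = lab d p'} = 1)"
proof -
  interpret field R by (rule F)
  let ?C = "carrier R"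
  obtain \<phi> where phi: "bij_betw \<phi> ?C {1..q}"
    using finite_same_card_bij[OF fin, of "{1..q}"] cq by auto
  have "card {1..n} \<le> card (?C \<times> ?C)" using nq cq fin by (simp add: card_cartesian_product power2_eq_square)
  then obtain \<psi> where psi: "\<psi> ` {1..n} \<subseteq> ?C \<times> ?C" "inj_on \<psi> {1..n}"
    using card_le_inj[of "{1..n}" "?C \<times> ?C"] fin by auto
  define D where "D = insert None (Some ` ?C)"
  define lab where "lab d p = \<phi> (lab0 R d (\<psi> p))" for d p
  define pos where "pos d p = \<phi> (pos0 d (\<psi> p))" for d p
  have finD: "finite D" using fin by (simp add: D_def)
  have cD: "card D = q + 1" using fin cq by (simp add: D_def card_image)
  have inC: "lab0 R d (\<psi> p) \<in> ?C \<and> pos0 d (\<psi> p) \<in> ?C" if "d \<in> D" "p \<in> {1..n}" for d p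
  proof -
    have "\<psi> p \<in> ?C \<times> ?C" using psi(1) that(2) by blast
    thus ?thesis using that(1) by (cases "\<psi> p") (auto simp: D_def lab0_def pos0_def)
  qed
  have phiC: "\<phi> x \<in> {1..q}" if "x \<in> ?C" for x using phi that by (auto simp: bij_betw_def)
  have phiI: "\<phi> x = \<phi> y \<longleftrightarrow> x = y" if "x \<in> ?C" "y \<in> ?C" for x y
    using phi that by (auto simp: bij_betw_def inj_on_def)
  have A: "\<forall>d\<in>D. \<forall>p\<in>{1..n}. lab d p \<in> {1..q} \<and> pos d p \<in> {1..q}"
    using inC phiC by (simp add: lab_def pos_def)
  have B: "\<forall>d\<in>D. \<forall>p\<in>{1..n}. \<forall>p'\<in>{1..n}. p \<noteq> p' \<longrightarrow> lab d p \<noteq> lab d p' \<or> pos d p \<noteq> pos d p'"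
  proof (intro ballI impI)
    fix d p p' assume d: "d \<in> D" and p: "p \<in> {1..n}" and p': "p' \<in> {1..n}" and ne: "p \<noteq> p'"
    obtain x y where xy: "\<psi> p = (x, y)" by fastforce
    obtain x' y' where xy': "\<psi> p' = (x', y')" by fastforce
    have "\<psi> p \<in> ?C \<times> ?C" "\<psi> p' \<in> ?C \<times> ?C" using psi(1) p p' by blast+
    hence cs: "x \<in> ?C" "y \<in> ?C" "x' \<in> ?C" "y' \<in> ?C" using xy xy' by auto
    have ne2: "(x, y) \<noteq> (x', y')" using psi(2) p p' ne xy xy' by (metis inj_on_def)
    have L: "lab0 R d (x,y) \<noteq> lab0 R d (x',y') \<or> pos0 d (x,y) \<noteq> pos0 d (x',y')"
    proof (cases d)
      case None thus ?thesis using ne2 by (simp add: lab0_def pos0_def)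
    next
      case (Some m)
      hence m: "m \<in> ?C" using d by (auto simp: D_def)
      show ?thesis
      proof (rule ccontr)
        assume "\<not> ?thesis"
        hence "x = x'" "y \<ominus>\<^bsub>R\<^esub> m \<otimes>\<^bsub>R\<^esub> x = y' \<ominus>\<^bsub>R\<^esub> m \<otimes>\<^bsub>R\<^esub> x'" using Some by (auto simp add: lab0_def pos0_def)
        hence "y = y'" using affine_inj[of x y y' m] cs m by simp
        thus False using \<open>x = x'\<close> ne2 by simp
      qed
    qed
    have i1: "lab0 R d (x,y) \<in> ?C" "pos0 d (x,y) \<in> ?C" "lab0 R d (x',y') \<in> ?C" "pos0 d (x',y') \<in> ?C"
      using inC[OF d p] inC[OF d p'] xy xy' by auto
    show "lab d p \<noteq> lab d p' \<or> pos d p \<noteq> pos d p'"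
      unfolding lab_def pos_def xy xy' using L phiI[OF i1(1) i1(3)] phiI[OF i1(2) i1(4)] by blast
  qed
  have Cc: "\<forall>p\<in>{1..n}. \<forall>p'\<in>{1..n}. p \<noteq> p' \<longrightarrow> card {d\<in>D. lab d p = lab d p'} = 1"
  proof (intro ballI impI)
    fix p p' assume p: "p \<in> {1..n}" and p': "p' \<in> {1..n}" and ne: "p \<noteq> p'"
    obtain x y where xy: "\<psi> p = (x, y)" by fastforce
    obtain x' y' where xy': "\<psi> p' = (x', y')" by fastforce
    have "\<psi> p \<in> ?C \<times> ?C" "\<psi> p' \<in> ?C \<times> ?C" using psi(1) p p' by blast+
    hence cs: "x \<in> ?C" "y \<in> ?C" "x' \<in> ?C" "y' \<in> ?C" using xy xy' by auto
    have ne2: "(x, y) \<noteq> (x', y')" using psi(2) p p' ne xy xy' by (metis inj_on_def)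
    have ee: "lab d p = lab d p' \<longleftrightarrow> lab0 R d (x,y) = lab0 R d (x',y')" if d: "d \<in> D" for d
    proof -
      have "lab0 R d (x,y) \<in> ?C" "lab0 R d (x',y') \<in> ?C"
        using inC[OF d p] inC[OF d p'] xy xy' by auto
      thus ?thesis unfolding lab_def xy xy' using phiI by blast
    qed
    have "{d\<in>D. lab d p = lab d p'} = {d\<in>D. lab0 R d (x,y) = lab0 R d (x',y')}"
      using ee by blast
    also have "card \<dots> = 1"
    proof (cases "x = x'")
      case True
      hence "y \<noteq> y'" using ne2 by auto
      hence "{d\<in>D. lab0 R d (x,y) = lab0 R d (x',y')} = {None}"
        using True cs affine_inj[of x' y y'] by (auto simp: D_def lab0_def)
      thus ?thesis by simp
    next
      case False
      then obtain m where m: "m \<in> ?C" "y \<ominus>\<^bsub>R\<^esub> m \<otimes>\<^bsub>R\<^esub> x = y' \<ominus>\<^bsub>R\<^esub> m \<otimes>\<^bsub>R\<^esub> x'"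
        and mu: "\<And>m'. m' \<in> ?C \<Longrightarrow> y \<ominus>\<^bsub>R\<^esub> m' \<otimes>\<^bsub>R\<^esub> x = y' \<ominus>\<^bsub>R\<^esub> m' \<otimes>\<^bsub>R\<^esub> x' \<Longrightarrow> m' = m"
        using affine_uniq[OF cs False] by blast
      have ee3: "d \<in> {d\<in>D. lab0 R d (x,y) = lab0 R d (x',y')} \<longleftrightarrow> d \<in> {Some m}" for d
        proof (cases d)
          case None thus ?thesis using False by (simp add: lab0_def)
        next
          case (Some m')
          have "m' \<in> ?C \<and> y \<ominus>\<^bsub>R\<^esub> m' \<otimes>\<^bsub>R\<^esub> x = y' \<ominus>\<^bsub>R\<^esub> m' \<otimes>\<^bsub>R\<^esub> x' \<longleftrightarrow> m' = m"
            using m mu by blast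
          thus ?thesis using Some by (simp add: D_def lab0_def inj_image_mem_iff)
        qed
      have "{d\<in>D. lab0 R d (x,y) = lab0 R d (x',y')} = {Some m}"
        using ee3 by blast
      thus ?thesis by simp
    qed
    finally show "card {d\<in>D. lab d p = lab d p'} = 1" .
  qed
  show ?thesis using finD cD A B Cc by blast
qed

lemma base: "\<exists>X. is_PSCA 3 3 1 X"
proof -
  let ?A = "perms 3"
  have sub: "?A \<subseteq> {xs. set xs \<subseteq> {1..3} \<and> length xs = 3}"
  proof
    fix xs assume "xs \<in> ?A"
    hence h: "distinct xs" "set xs = {1..3}" by (auto simp: perms_def)
    hence "length xs = card {1..3::nat}" by (metis distinct_card)
    thus "xs \<in> {xs. set xs \<subseteq> {1..3} \<and> length xs = 3}" using h by simp
  qed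
  have fin: "finite ?A" by (rule finite_subset[OF sub finite_lists_length_eq]) simp
  have "is_PSCA 3 3 1 (mset_set ?A)"
    unfolding is_PSCA_def
  proof (intro conjI ballI)
    fix \<pi> assume "\<pi> \<in># mset_set ?A" thus "\<pi> \<in> ?A" using fin by simp
  next
    fix \<kappa> assume "\<kappa> \<in> kseqs 3 3"
    hence k: "distinct \<kappa>" "length \<kappa> = 3" "set \<kappa> \<subseteq> {1..3}" by (auto simp: kseqs_def)
    have "card (set \<kappa>) = 3" using k by (simp add: distinct_card)
    hence "set \<kappa> = {1..3}" using k(3) by (intro card_subset_eq) auto
    hence kA: "\<kappa> \<in> ?A" using k by (simp add: perms_def)
    have "{\<pi>\<in>?A. subseq \<kappa> \<pi>} = {\<kappa>}"
    proof (intro equalityI subsetI)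
      fix \<pi> assume p: "\<pi> \<in> {\<pi>\<in>?A. subseq \<kappa> \<pi>}"
      hence "length \<pi> = 3" using sub by auto
      hence "\<kappa> = \<pi>" using p k(2) subseq_same_length[of \<kappa> \<pi>] by auto
      thus "\<pi> \<in> {\<kappa>}" by simp
    next
      fix \<pi> assume "\<pi> \<in> {\<kappa>}" thus "\<pi> \<in> {\<pi>\<in>?A. subseq \<kappa> \<pi>}" using kA by simp
    qed
    thus "size (filter_mset (subseq \<kappa>) (mset_set ?A)) = 1" using fin by simp
  qed
  thus ?thesis by blast
qed

lemma lam_pos: "lam_seq r > 0"
proof (induction r rule: lam_seq.induct)
  case (1 r)
  show ?case by (subst lam_seq.simps) (use 1 in \<open>auto simp del: lam_seq.simps\<close>)
qed

lemma field_exists: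
  assumes "s \<ge> 1"
  shows "\<exists>R :: three mod_ring poly ring. field R \<and> finite (carrier R) \<and> card (carrier R) = 3^s"
proof -
  obtain f :: "three mod_ring poly" where f: "irreducible f" "degree f = s" using irr_exists[OF assms] by blast
  interpret poly_mod_type_irr "int CARD(three)" f by (unfold_locales, auto simp add: f)
  have "field R" by (rule field_R.field_axioms)
  moreover have "finite (carrier R)" by simp
  moreover have "card (carrier R) = 3^s" by (simp add: R_def card_three f)
  ultimately show ?thesis by blast
qed

lemma main: "r \<ge> 1 \<Longrightarrow> \<exists>X. is_PSCA (3^r) 3 (lam_seq r) X"
proof (induction r rule: less_induct)
  case (less r)
  show ?case
  proof (cases "r = 1")
    case True
    have "lam_seq 1 = 1" by (subst lam_seq.simps) simp
    thus ?thesis using True base by (simp del: lam_seq.simps)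
  next
    case False
    hence r2: "r \<ge> 2" using less.prems by simp
    define s where "s = (r + 1) div 2"
    have s1: "s \<ge> 1" and sr: "s < r" and rs: "r \<le> 2 * s" using r2 by (auto simp: s_def)
    obtain X where X: "is_PSCA (3^s) 3 (lam_seq s) X" using less.IH[OF sr s1] by blast
    obtain R :: "three mod_ring poly ring" where R: "field R" "finite (carrier R)" "card (carrier R) = 3^s"
      using field_exists[OF s1] by blast
    have "(3::nat)^r \<le> 3^(2*s)" using rs by (intro power_increasing) auto
    hence nq: "(3::nat)^r \<le> (3^s)^2" by (simp add: power_mult[symmetric] mult.commute)
    obtain D :: "three mod_ring poly option set" and lab pos :: "three mod_ring poly option \<Rightarrow> nat \<Rightarrow> nat" where
      D: "finite D" "card D = 3^s + 1"
      and A: "\<forall>d\<in>D. \<forall>p\<in>{1..3^r}. lab d p \<in> {1..3^s} \<and> pos d p \<in> {1..3^s}"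
      and B: "\<forall>d\<in>D. \<forall>p\<in>{1..3^r}. \<forall>p'\<in>{1..3^r}. p \<noteq> p' \<longrightarrow> lab d p \<noteq> lab d p' \<or> pos d p \<noteq> pos d p'"
      and C: "\<forall>p\<in>{1..3^r}. \<forall>p'\<in>{1..3^r}. p \<noteq> p' \<longrightarrow> card {d\<in>D. lab d p = lab d p'} = 1"
      using affine_structure[OF R nq] by blast
    have "(3::nat)^1 \<le> 3^s" using s1 by (intro power_increasing) auto
    hence q3: "(3::nat)^s \<ge> 3" by simp
    obtain Y where Y: "is_PSCA (3^r) 3 (2 * card D * lam_seq s) Y"
      using construction[OF X q3 D(1) A B C] by blast
    have "lam_seq r = 2 * (3 ^ s + 1) * lam_seq s"
      using r2 by (subst lam_seq.simps) (simp add: s_def del: lam_seq.simps)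
    hence "lam_seq r = 2 * card D * lam_seq s" using D(2) by (simp del: lam_seq.simps)
    thus ?thesis using Y by metis
  qed
qed

theorem lemma3p2:
  fixes r :: nat
  assumes "r \<ge> 1"
  shows "g (3 ^ r) 3 \<le> lam_seq r"
  unfolding g_def by (rule Least_le) (use main[OF assms] lam_pos in \<open>auto simp del: lam_seq.simps\<close>)

end
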